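(* Let $A=R/I$ be a graded Artinian Gorenstein algebra of socle degree $j$ with $I_2=\langle w^2,wx,wy\rangle$ and dual generator $F=G+WZ^{[j-1]}$, $G\in K_{DP}[X,Y,Z]_j$. Let $J=\mathrm{Ann}_R(G)$. For $\lambda\in K$ set $G_\lambda=G+\lambda Z^{[j]}$, $F_\lambda=F+\lambda Z^{[j]}$, $J(\lambda)=\mathrm{Ann}_R(G_\lambda)$, $I(\lambda)=\mathrm{Ann}_R(F_\lambda)$. Then $H(R/I)=H(R/I(\lambda))$ and $H(R/(I\cap J))=H(R/(I(\lambda)\cap J(\lambda)))$. If moreover $\alpha(J)\le j/2$ and $\lambda\ne0$, then $\alpha(J(\lambda))=j+1-\alpha(J)$, $H(R/J(\lambda))_i=H(R/J)_i+1$ for $\alpha(J)\le i\le j-\alpha(J)$ and $H(R/J(\lambda))_i=H(R/J)_i$ otherwise, and $H(R/I(\lambda))=H(R/J(\lambda))+(0,1,1,\dots,1,0)$.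
   Context: $K$ algebraically closed, $R=K[w,x,y,z]$, with contraction action on the divided power algebra $K_{DP}[W,X,Y,Z]$; $\mathrm{Ann}_R(F)=\{h\in R:h\circ F=0\}$. For an ideal $J=\mathrm{Ann}_R(G)$ with $G\in K_{DP}[X,Y,Z]$, set $J'=J\cap K[x,y,z]$ and $\alpha(J)=\min\{\alpha\ge1: J'_\alpha\not\subset(x,y)K[x,y,z]\}$. The sequence $(0,1,\dots,1,0)$ has length $j+1$. *)

theory Defs
  imports "HOL-Library.Poly_Mapping" "HOL-Library.Product_Plus"
          "HOL-Computational_Algebra.Polynomial"
begin

text \<open>Monomials in the four variables w,x,y,z (resp. W,X,Y,Z) are encoded by their
exponent vectors (a,b,c,d).  An element of R = K[w,x,y,z] is a finitely supported map
from exponent vectors to K (coefficient of w^a x^b y^c z^d); an element of the divided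
power algebra K_DP[W,X,Y,Z] likewise (coefficient of W^[a] X^[b] Y^[c] Z^[d]).\<close>

type_synonym mon = "nat \<times> nat \<times> nat \<times> nat"
type_synonym 'k rpoly = "mon \<Rightarrow>\<^sub>0 'k"
type_synonym 'k dppoly = "mon \<Rightarrow>\<^sub>0 'k"

fun mdeg :: "mon \<Rightarrow> nat" where
  "mdeg (a, b, c, d) = a + b + c + d"

definition homog :: "nat \<Rightarrow> (mon \<Rightarrow>\<^sub>0 'k::zero) \<Rightarrow> bool" where
  "homog i p \<longleftrightarrow> (\<forall>m\<in>Poly_Mapping.keys p. mdeg m = i)"

text \<open>Contraction: w^a x^b y^c z^d acting on W^[a'] ... gives the monomial with exponent
difference if it is componentwise nonnegative, else 0.  Result: coefficient function
of the resulting divided power polynomial.\<close>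
definition contract :: "'k::comm_ring_1 rpoly \<Rightarrow> 'k dppoly \<Rightarrow> (mon \<Rightarrow> 'k)" where
  "contract h F = (\<lambda>c. \<Sum>a\<in>Poly_Mapping.keys h. Poly_Mapping.lookup h a * Poly_Mapping.lookup F (a + c))"

definition Ann :: "'k::comm_ring_1 dppoly \<Rightarrow> 'k rpoly set" where
  "Ann F = {h. contract h F = (\<lambda>_. 0)}"

definition pscale :: "'k::field \<Rightarrow> (mon \<Rightarrow>\<^sub>0 'k) \<Rightarrow> (mon \<Rightarrow>\<^sub>0 'k)" where
  "pscale c p = Poly_Mapping.map (\<lambda>v. c * v) p"

definition kdim :: "('k::field rpoly) set \<Rightarrow> nat" where
  "kdim S = vector_space.dim pscale S"

definition kspan :: "('k::field rpoly) set \<Rightarrow> 'k rpoly set" where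
  "kspan S = module.span pscale S"

definition Rdeg :: "nat \<Rightarrow> ('k::zero) rpoly set" where
  "Rdeg i = {p. homog i p}"

definition hilb :: "('k::field) rpoly set \<Rightarrow> nat \<Rightarrow> nat" where
  "hilb I i = kdim (Rdeg i :: 'k rpoly set) - kdim (I \<inter> Rdeg i)"

definition vw :: "'k::comm_ring_1 rpoly" where "vw = Poly_Mapping.single (1,0,0,0) 1"
definition vx :: "'k::comm_ring_1 rpoly" where "vx = Poly_Mapping.single (0,1,0,0) 1"
definition vy :: "'k::comm_ring_1 rpoly" where "vy = Poly_Mapping.single (0,0,1,0) 1"
definition vz :: "'k::comm_ring_1 rpoly" where "vz = Poly_Mapping.single (0,0,0,1) 1"

definition Kxyz :: "('k::zero) rpoly set" where
  "Kxyz = {p. \<forall>m\<in>Poly_Mapping.keys p. fst m = 0}"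

definition ideal_xy :: "('k::comm_ring_1) rpoly set" where
  "ideal_xy = {vx * p + vy * q | p q. p \<in> Kxyz \<and> q \<in> Kxyz}"

definition alpha :: "('k::comm_ring_1) rpoly set \<Rightarrow> nat" where
  "alpha J = (LEAST a. 1 \<le> a \<and> \<not> ((J \<inter> Kxyz) \<inter> Rdeg a \<subseteq> ideal_xy))"

definition DPxyz_deg :: "nat \<Rightarrow> ('k::zero) dppoly set" where
  "DPxyz_deg j = {G. \<forall>m\<in>Poly_Mapping.keys G. fst m = 0 \<and> mdeg m = j}"

end

theory Submission
  imports Defs
begin

lemma lookup_pscale[simp]: "Poly_Mapping.lookup (pscale c p) k = c * Poly_Mapping.lookup p k"
  unfolding pscale_def by (simp add: Poly_Mapping.map.rep_eq when_def)

interpretation kv: vector_space "pscale :: 'k::field \<Rightarrow> _"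
  by unfold_locales (auto intro!: poly_mapping_eqI simp: lookup_add algebra_simps)

lemma kdim_eq: "kdim = kv.dim" unfolding kdim_def by (simp add: fun_eq_iff)
lemma kspan_eq: "kspan = kv.span" unfolding kspan_def by (simp add: fun_eq_iff)

lemma mdeg_add: "mdeg (a + b) = mdeg a + mdeg b"
  by (cases a; cases b) auto


abbreviation lk where "lk \<equiv> Poly_Mapping.lookup"
abbreviation ks where "ks \<equiv> Poly_Mapping.keys"

lemma contract_superset:
  assumes "finite S" "ks h \<subseteq> S"
  shows "contract h F c = (\<Sum>a\<in>S. lk h a * lk F (a + c))"
  unfolding contract_def
  by (rule sum.mono_neutral_left[OF assms]) (auto simp: in_keys_iff)

lemma contract_add_left: "contract (h1 + h2) F c = contract h1 F c + contract h2 F c"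
proof -
  let ?S = "ks h1 \<union> ks h2"
  have "ks (h1 + h2) \<subseteq> ?S" by (simp add: keys_add)
  then show ?thesis
    by (simp add: contract_superset[of ?S] lookup_add sum.distrib distrib_right)
qed

lemma contract_diff_left: "contract (h1 - h2) F c = contract h1 F c - contract h2 F c"
proof -
  let ?S = "ks h1 \<union> ks h2"
  have "ks (h1 - h2) \<subseteq> ?S"
    by (auto simp: in_keys_iff lookup_minus)
  then show ?thesis
    by (simp add: contract_superset[of ?S] lookup_minus sum_subtractf left_diff_distrib)
qed

lemma contract_scale_left: "contract (pscale t h) F c = t * contract h F c"
proof -
  have "ks (pscale t h) \<subseteq> ks h" by (auto simp: in_keys_iff)
  then show ?thesis
    by (simp add: contract_superset[of "ks h"] sum_distrib_left mult.assoc)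
qed

lemma contract_zero_left: "contract 0 F c = 0"
  by (simp add: contract_def)

lemma contract_single_left: "contract (Poly_Mapping.single m v) F c = v * lk F (m + c)"
  by (simp add: contract_superset[of "{m}"] lookup_single)

lemma contract_add_right: "contract h (P + Q) c = contract h P c + contract h Q c"
  by (simp add: contract_def lookup_add sum.distrib distrib_left)

lemma contract_single_right_hit:
  assumes "a0 + c = m"
  shows "contract h (Poly_Mapping.single m v) c = lk h a0 * v"
proof -
  have "contract h (Poly_Mapping.single m v) c = (\<Sum>a\<in>insert a0 (ks h). lk h a * lk (Poly_Mapping.single m v) (a + c))"
    by (rule contract_superset) auto
  also have "\<dots> = (\<Sum>a\<in>insert a0 (ks h). if a = a0 then lk h a * v else 0)"
    using assms by (intro sum.cong refl) (auto simp: lookup_single when_def)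
  also have "\<dots> = lk h a0 * v" by (simp add: sum.delta)
  finally show ?thesis .
qed

lemma contract_single_right_miss:
  assumes "\<forall>a. a + c \<noteq> m"
  shows "contract h (Poly_Mapping.single m v) c = 0"
  using assms by (auto simp: contract_def lookup_single when_def intro!: sum.neutral)

lemma contract_deg:
  assumes h: "h \<in> Rdeg i" and P: "\<forall>m\<in>ks P. mdeg m = n" and nz: "contract h P c \<noteq> 0"
  shows "i + mdeg c = n"
proof -
  from nz obtain a where a: "a \<in> ks h" "lk h a * lk P (a + c) \<noteq> 0"
    unfolding contract_def by (meson sum.not_neutral_contains_not_neutral)
  then have "a + c \<in> ks P" by (auto simp: in_keys_iff)
  with P have "mdeg (a + c) = n" by auto
  moreover have "mdeg a = i" using h a(1) by (auto simp: Rdeg_def homog_def)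
  ultimately show ?thesis by (simp add: mdeg_add)
qed

lemma contract_W:
  assumes P: "\<forall>m\<in>ks P. fst m = 0" and c: "fst c \<noteq> 0"
  shows "contract h P c = 0"
proof -
  have "lk P (a + c) = 0" for a
    using P[rule_format, of "a + c"] c by (auto simp: in_keys_iff)
  then show ?thesis by (simp add: contract_def)
qed

lemma contract_Wsingle:
  assumes P: "\<forall>m\<in>ks P. fst m = 0" and a: "fst a \<noteq> 0"
  shows "contract (Poly_Mapping.single a v) P c = 0"
proof -
  have "lk P (a + c) = 0"
    using P[rule_format, of "a + c"] a by (auto simp: in_keys_iff)
  then show ?thesis by (simp add: contract_single_left)
qed

lemma pairing:
  "(\<Sum>a\<in>ks g. lk g a * contract h P a) = (\<Sum>b\<in>ks h. lk h b * contract g P b)"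
proof -
  have "(\<Sum>a\<in>ks g. lk g a * contract h P a) = (\<Sum>a\<in>ks g. \<Sum>b\<in>ks h. lk g a * lk h b * lk P (b + a))"
    by (simp add: contract_def sum_distrib_left mult.assoc)
  also have "\<dots> = (\<Sum>b\<in>ks h. \<Sum>a\<in>ks g. lk g a * lk h b * lk P (b + a))"
    by (rule sum.swap)
  also have "\<dots> = (\<Sum>b\<in>ks h. lk h b * contract g P b)"
    by (simp add: contract_def sum_distrib_left add.commute mult.commute mult.left_commute)
  finally show ?thesis .
qed


interpretation kvp: vector_space_pair "pscale :: 'k::field \<Rightarrow> _" "pscale :: 'k::field \<Rightarrow> _" ..

definition addhom :: "('k::field rpoly \<Rightarrow> 'k) \<Rightarrow> bool" where
  "addhom f \<longleftrightarrow> (\<forall>x y. f (x + y) = f x + f y) \<and> (\<forall>c x. f (pscale c x) = c * f x)"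

lemma addhom_diff: "addhom f \<Longrightarrow> f (x - y) = f x - f y"
proof -
  assume f: "addhom f"
  have "f (x - y) + f y = f x" using f unfolding addhom_def by (metis diff_add_cancel)
  then show ?thesis by (simp add: eq_diff_eq)
qed

lemma addhom_zero: "addhom f \<Longrightarrow> f 0 = 0"
  using addhom_diff[of f 0 0] by simp

lemma addhom_lookup: "addhom (\<lambda>h. lk h m)"
  by (simp add: addhom_def lookup_add)

lemma addhom_scale: "addhom f \<Longrightarrow> addhom (\<lambda>h. c * f h)"
  by (simp add: addhom_def algebra_simps)

lemma addhom_contract: "addhom (\<lambda>h. contract h P c)"
  by (simp add: addhom_def contract_add_left contract_scale_left)

lemma linear_shift:
  assumes "addhom f"
  shows "Vector_Spaces.linear pscale pscale (\<lambda>h. h + pscale (f h) u)"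
  unfolding Vector_Spaces.linear_iff
proof (intro conjI allI)
  show "vector_space (pscale :: 'a \<Rightarrow> _)" by (rule kv.vector_space_axioms)
  show "vector_space (pscale :: 'a \<Rightarrow> _)" by (rule kv.vector_space_axioms)
  fix x y :: "'a rpoly" and c :: 'a
  show "x + y + pscale (f (x + y)) u = x + pscale (f x) u + (y + pscale (f y) u)"
    using assms unfolding addhom_def by (intro poly_mapping_eqI) (simp add: lookup_add algebra_simps)
  show "pscale c x + pscale (f (pscale c x)) u = pscale c (x + pscale (f x) u)"
    using assms unfolding addhom_def by (intro poly_mapping_eqI) (simp add: lookup_add algebra_simps)
qed

lemma dim_image_inj:
  assumes lin: "Vector_Spaces.linear pscale pscale T" and inj: "inj T"
  shows "kv.dim (T ` X) = kv.dim (X :: 'k::field rpoly set)"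
proof -
  obtain B where B: "B \<subseteq> X" "kv.independent B" "X \<subseteq> kv.span B" "card B = kv.dim X"
    by (rule kv.basis_exists)
  have "kv.independent (T ` B)"
    using kvp.linear_independent_injective_image[OF lin B(2)] inj by (auto intro: inj_on_subset)
  moreover have "T ` B \<subseteq> T ` X" using B(1) by auto
  moreover have "T ` X \<subseteq> kv.span (T ` B)"
    using B(3) kvp.linear_span_image[OF lin, of B] by auto
  ultimately have "card (T ` B) = kv.dim (T ` X)"
    by (rule kv.basis_card_eq_dim[rotated 2])
  moreover have "card (T ` B) = card B"
    using inj by (auto intro: card_image inj_on_subset)
  ultimately show ?thesis using B(4) by simp
qed

lemma dim_shift:
  assumes f: "addhom f" and fu: "f u = 0"
    and XY: "\<And>h. h \<in> X \<longleftrightarrow> h + pscale (f h) u \<in> Y"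
  shows "kv.dim X = kv.dim (Y :: 'k::field rpoly set)"
proof -
  let ?T = "\<lambda>h. h + pscale (f h) u"
  have f2: "f (h + pscale c u) = f h" for h c
    using f fu unfolding addhom_def by simp
  have f3: "f (h - pscale c u) = f h" for h c
    using addhom_diff[OF f, of h "pscale c u"] f fu unfolding addhom_def by simp
  have inv: "?T (h - pscale (f h) u) = h" for h
    using f3[of h "f h"] by simp
  have inj: "inj ?T"
  proof (rule injI)
    fix x y assume "?T x = ?T y"
    then have "f (?T x) = f (?T y)" by simp
    then have "f x = f y" using f2 by simp
    with \<open>?T x = ?T y\<close> show "x = y" by simp
  qed
  have "?T ` X = Y"
  proof
    show "?T ` X \<subseteq> Y" using XY by blast
    show "Y \<subseteq> ?T ` X"
    proof
      fix y assume y: "y \<in> Y"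
      have "?T (y - pscale (f y) u) \<in> Y" using y by (simp only: inv)
      then have "y - pscale (f y) u \<in> X" by (rule XY[THEN iffD2])
      moreover have "y = ?T (y - pscale (f y) u)" by (rule inv[symmetric])
      ultimately show "y \<in> ?T ` X" by (intro image_eqI)
    qed
  qed
  then show ?thesis using dim_image_inj[OF linear_shift[OF f] inj, of X] by simp
qed

definition monsof :: "nat \<Rightarrow> mon set" where "monsof i = {m. mdeg m = i}"

lemma finite_monsof: "finite (monsof i)"
proof -
  have "monsof i \<subseteq> {0..i} \<times> {0..i} \<times> {0..i} \<times> {0..i}"
    by (auto simp: monsof_def)
  then show ?thesis by (rule finite_subset) auto
qed

lemma poly_as_sum: "p = (\<Sum>m\<in>ks p. Poly_Mapping.single m (lk p m))"
  by (rule poly_mapping_eqI) (auto simp: lookup_sum lookup_single when_def in_keys_iff sum.delta)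

lemma single_as_scale: "Poly_Mapping.single m v = pscale v (Poly_Mapping.single m 1)"
  by (rule poly_mapping_eqI) (simp add: lookup_single when_def)

lemma Rdeg_span: "Rdeg i \<subseteq> kv.span ((\<lambda>m. Poly_Mapping.single m (1::'k::field)) ` monsof i)"
proof
  fix p :: "'k::field rpoly" assume p: "p \<in> Rdeg i"
  have "p = (\<Sum>m\<in>ks p. pscale (lk p m) (Poly_Mapping.single m 1))"
    by (subst poly_as_sum) (simp add: single_as_scale[symmetric])
  also have "\<dots> \<in> kv.span ((\<lambda>m. Poly_Mapping.single m (1::'k::field)) ` monsof i)"
    using p by (intro kv.span_sum kv.span_scale kv.span_base) (auto simp: Rdeg_def homog_def monsof_def)
  finally show "p \<in> kv.span ((\<lambda>m. Poly_Mapping.single m 1) ` monsof i)" .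
qed

lemma subspace_Rdeg: "kv.subspace (Rdeg i :: 'k::field rpoly set)"
  unfolding kv.subspace_def Rdeg_def homog_def
proof (intro conjI allI ballI impI; simp only: mem_Collect_eq)
  show "\<forall>m\<in>ks (0::'k rpoly). mdeg m = i" by simp
next
  fix x y :: "'k rpoly" assume x: "\<forall>m\<in>ks x. mdeg m = i" and y: "\<forall>m\<in>ks y. mdeg m = i"
  show "\<forall>m\<in>ks (x + y). mdeg m = i" using x y keys_add[of x y] by blast
next
  fix c :: 'k and x :: "'k rpoly" assume x: "\<forall>m\<in>ks x. mdeg m = i"
  show "\<forall>m\<in>ks (pscale c x). mdeg m = i" using x by (auto simp: in_keys_iff)
qed

lemma subspace_Ann: "kv.subspace (Ann P :: 'k::field rpoly set)"
  unfolding kv.subspace_def Ann_def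
  by (auto simp: fun_eq_iff contract_add_left contract_scale_left contract_zero_left)

lemma subspace_ker: "addhom f \<Longrightarrow> kv.subspace {h. f h = 0}"
  unfolding kv.subspace_def using addhom_zero[of f] by (simp add: addhom_def)

lemma indep_finite_Rdeg:
  assumes "B \<subseteq> Rdeg i" "kv.independent B"
  shows "finite (B :: 'k::field rpoly set)"
proof -
  let ?M = "(\<lambda>m. Poly_Mapping.single m (1::'k)) ` monsof i"
  have "finite ?M" using finite_monsof by simp
  moreover have "B \<subseteq> kv.span ?M" using assms(1) Rdeg_span[of i] by auto
  ultimately show ?thesis using kv.independent_span_bound[OF _ assms(2)] by simp
qed

lemma dim_le_Rdeg:
  fixes X :: "'k::field rpoly set"
  assumes "X \<subseteq> Rdeg i"
  shows "kv.dim X \<le> kv.dim (Rdeg i :: 'k::field rpoly set)"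
proof -
  obtain B where B: "B \<subseteq> Rdeg i" "kv.independent B" "Rdeg i \<subseteq> kv.span (B :: 'k rpoly set)" "card B = kv.dim (Rdeg i :: 'k rpoly set)"
    by (rule kv.basis_exists)
  have "finite B" using indep_finite_Rdeg[OF B(1,2)] .
  have "X \<subseteq> kv.span B" using assms B(3) by (rule order_trans)
  from kv.dim_le_card[OF this \<open>finite B\<close>] show ?thesis using B(4) by simp
qed

lemma dim_codim1:
  assumes X: "kv.subspace X" "X \<subseteq> Rdeg i" and f: "addhom f"
    and k: "k \<in> X" "f k \<noteq> 0"
    and Y: "Y = X \<inter> {h. f h = 0}"
  shows "kv.dim X = kv.dim (Y :: 'k::field rpoly set) + 1"
proof -
  have Ysub: "kv.subspace Y" using Y X(1) subspace_ker[OF f] kv.subspace_inter by simp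
  obtain B where B: "B \<subseteq> Y" "kv.independent B" "Y \<subseteq> kv.span B" "card B = kv.dim Y"
    by (rule kv.basis_exists)
  have finB: "finite B" using indep_finite_Rdeg[of B i] B X Y by auto
  have spB: "kv.span B \<subseteq> Y" using kv.span_minimal[OF B(1) Ysub] .
  have kB: "k \<notin> kv.span B" using spB k Y by auto
  have ind: "kv.independent (insert k B)" using kv.independent_insertI[OF kB B(2)] .
  have sub: "insert k B \<subseteq> X" using B(1) Y k by auto
  have span: "X \<subseteq> kv.span (insert k B)"
  proof
    fix x assume x: "x \<in> X"
    let ?c = "f x / f k"
    have "x - pscale ?c k \<in> X" using x k X(1) by (simp add: kv.subspace_diff kv.subspace_scale)
    moreover have "f (x - pscale ?c k) = 0"
      using f k(2) by (simp add: addhom_diff) (simp add: addhom_def)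
    ultimately have "x - pscale ?c k \<in> kv.span B" using B(3) Y by auto
    then have "x - pscale ?c k \<in> kv.span (insert k B)" by (meson kv.span_mono subset_insertI subsetD)
    moreover have "pscale ?c k \<in> kv.span (insert k B)" by (simp add: kv.span_base kv.span_scale)
    ultimately have "(x - pscale ?c k) + pscale ?c k \<in> kv.span (insert k B)" by (rule kv.span_add)
    then show "x \<in> kv.span (insert k B)" by simp
  qed
  have "card (insert k B) = kv.dim X" using kv.basis_card_eq_dim[OF sub span ind] .
  moreover have "k \<notin> B" using kB kv.span_base by blast
  then have "card (insert k B) = card B + 1" using finB by simp
  ultimately show ?thesis using B(4) by simp
qed


lemma contract_sum_left:
  "finite A \<Longrightarrow> contract (\<Sum>x\<in>A. f x) P c = (\<Sum>x\<in>A. contract (f x) P c)"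
  by (induction A rule: finite_induct) (simp_all add: contract_zero_left contract_add_left)

lemma contract_add_right_fun: "contract h (P + Q) = (\<lambda>c. contract h P c + contract h Q c)"
  by (simp add: fun_eq_iff contract_add_right)

lemma in_RdegD: "h \<in> Rdeg i \<Longrightarrow> m \<in> ks h \<Longrightarrow> mdeg m = i"
  by (auto simp: Rdeg_def homog_def)

lemma in_RdegD0: "h \<in> Rdeg i \<Longrightarrow> mdeg m \<noteq> i \<Longrightarrow> lk h m = 0"
  by (auto simp: Rdeg_def homog_def in_keys_iff)

lemma single_in_Rdeg: "mdeg m = i \<Longrightarrow> Poly_Mapping.single m v \<in> Rdeg i"
  by (auto simp: Rdeg_def homog_def)

lemma contract_single_Rdeg:
  assumes h: "h \<in> Rdeg i"
  shows "contract h (Poly_Mapping.single m v) c =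
    (if (\<exists>a. a + c = m \<and> mdeg a = i) then lk h (m - c) * v else 0)"
proof (cases "\<exists>a. a + c = m")
  case True
  then obtain a where a: "a + c = m" by blast
  have am: "a = m - c" using a by (cases a; cases c; auto)
  have "contract h (Poly_Mapping.single m v) c = lk h a * v" by (rule contract_single_right_hit[OF a])
  moreover have "mdeg a \<noteq> i \<Longrightarrow> lk h a = 0" using in_RdegD0[OF h] by blast
  moreover have "(\<exists>a. a + c = m \<and> mdeg a = i) \<longleftrightarrow> mdeg a = i"
    using a by (metis add_right_cancel)
  ultimately show ?thesis using am by auto
next
  case False
  then show ?thesis by (auto simp: contract_single_right_miss)
qed

lemma contract_zsingle:
  assumes h: "h \<in> Rdeg i"
  shows "contract h (Poly_Mapping.single (0,0,0,n) v) c =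
    (if c = (0,0,0,n - i) \<and> i \<le> n then lk h (0,0,0,i) * v else 0)"
proof -
  obtain c1 c2 c3 c4 where c: "c = (c1,c2,c3,c4)" by (cases c) auto
  have "(\<exists>a. a + c = (0,0,0,n) \<and> mdeg a = i) \<longleftrightarrow> (c = (0,0,0,n - i) \<and> i \<le> n)"
  proof
    assume "\<exists>a. a + c = (0,0,0,n) \<and> mdeg a = i"
    then obtain a where "a + c = (0,0,0,n)" "mdeg a = i" by blast
    then show "c = (0,0,0,n - i) \<and> i \<le> n" using c by (cases a) auto
  next
    assume "c = (0,0,0,n - i) \<and> i \<le> n"
    then show "\<exists>a. a + c = (0,0,0,n) \<and> mdeg a = i" by (intro exI[of _ "(0,0,0,i)"]) auto
  qed
  then show ?thesis by (simp add: contract_single_Rdeg[OF h] c)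
qed

lemma contract_wsingle:
  assumes h: "h \<in> Rdeg i" and i: "1 \<le> i"
  shows "contract h (Poly_Mapping.single (1,0,0,n) v) c =
    (if c = (1,0,0,n - i) \<and> i \<le> n then lk h (0,0,0,i) * v else 0) +
    (if c = (0,0,0,n + 1 - i) \<and> i \<le> n + 1 then lk h (1,0,0,i - 1) * v else 0)"
proof -
  obtain c1 c2 c3 c4 where c: "c = (c1,c2,c3,c4)" by (cases c) auto
  show ?thesis
  proof (cases "\<exists>a. a + c = (1,0,0,n) \<and> mdeg a = i")
    case True
    then obtain a where a: "a + c = (1,0,0,n)" "mdeg a = i" by blast
    obtain a1 a2 a3 a4 where aa: "a = (a1,a2,a3,a4)" by (cases a) auto
    have "(c1 = 1 \<and> a1 = 0) \<or> (c1 = 0 \<and> a1 = 1)" using a aa c by auto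
    then show ?thesis
    proof
      assume "c1 = 1 \<and> a1 = 0"
      then have "c = (1,0,0,n - i)" "i \<le> n" using a aa c by auto
      then show ?thesis using True by (simp add: contract_single_Rdeg[OF h])
    next
      assume "c1 = 0 \<and> a1 = 1"
      then have "c = (0,0,0,n + 1 - i)" "i \<le> n + 1" using a aa c by auto
      moreover have "(1,0,0,n) - (0,0,0,n + 1 - i) = ((1,0,0,i - 1)::mon)" using i \<open>i \<le> n + 1\<close> by auto
      ultimately show ?thesis using True by (simp add: contract_single_Rdeg[OF h])
    qed
  next
    case False
    have "\<not> (c = (1,0,0,n - i) \<and> i \<le> n)"
    proof
      assume "c = (1,0,0,n - i) \<and> i \<le> n"
      then have "(0,0,0,i) + c = (1,0,0,n) \<and> mdeg (0,0,0,i) = i" by auto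
      then show False using False by blast
    qed
    moreover have "\<not> (c = (0,0,0,n + 1 - i) \<and> i \<le> n + 1)"
    proof
      assume "c = (0,0,0,n + 1 - i) \<and> i \<le> n + 1"
      then have "(1,0,0,i - 1) + c = (1,0,0,n) \<and> mdeg (1,0,0,i - 1) = i" using i by auto
      then show False using False by blast
    qed
    ultimately show ?thesis using False by (auto simp: contract_single_Rdeg[OF h])
  qed
qed

definition shiftp :: "mon \<Rightarrow> 'k::comm_ring_1 rpoly \<Rightarrow> 'k rpoly" where
  "shiftp s h = (\<Sum>x\<in>ks h. Poly_Mapping.single (x + s) (lk h x))"

lemma lookup_shiftp: "lk (shiftp s h) (x0 + s) = lk h x0"
proof -
  have "lk (shiftp s h) (x0 + s) = (\<Sum>x\<in>ks h. (lk h x when x + s = x0 + s))"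
    by (simp add: shiftp_def lookup_sum lookup_single)
  also have "\<dots> = (\<Sum>x\<in>ks h. (if x = x0 then lk h x else 0))"
    by (intro sum.cong refl) (auto simp: when_def)
  also have "\<dots> = lk h x0" by (simp add: sum.delta in_keys_iff)
  finally show ?thesis .
qed

lemma contract_shiftp: "contract (shiftp s h) P c = contract h P (s + c)"
proof -
  have "contract (shiftp s h) P c = (\<Sum>x\<in>ks h. contract (Poly_Mapping.single (x + s) (lk h x)) P c)"
    unfolding shiftp_def by (rule contract_sum_left) simp
  also have "\<dots> = (\<Sum>x\<in>ks h. lk h x * lk P (x + (s + c)))"
    by (simp add: contract_single_left add.assoc)
  finally show ?thesis by (simp add: contract_def)
qed

lemma shiftp_Rdeg: "h \<in> Rdeg a \<Longrightarrow> shiftp s (h :: 'k::field rpoly) \<in> Rdeg (a + mdeg s)"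
  unfolding shiftp_def
  by (rule kv.subspace_sum[OF subspace_Rdeg]) (metis single_in_Rdeg mdeg_add in_RdegD)


lemma keys_add_sub: "ks (A + B) \<subseteq> ks A \<union> ks B"
  by (rule keys_add)

lemma mdeg_zero_iff: "mdeg c = 0 \<longleftrightarrow> c = 0"
  by (cases c) (auto simp: zero_prod_def)

lemma Ann_iff: "h \<in> Ann P \<longleftrightarrow> (\<forall>c. contract h P c = 0)"
  by (auto simp: Ann_def fun_eq_iff)

locale setting =
  fixes G :: "'k::field dppoly" and j :: nat and mG :: mon
  assumes Gk: "\<And>m. m \<in> ks G \<Longrightarrow> fst m = 0 \<and> mdeg m = j"
    and mG: "mG \<in> ks G" "mG \<noteq> (0,0,0,j)" and j2: "2 \<le> j"
begin

definition W1 :: "'k dppoly" where "W1 = Poly_Mapping.single (1,0,0,j-1) 1"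
definition Zl :: "'k \<Rightarrow> 'k dppoly" where "Zl lam = Poly_Mapping.single (0,0,0,j) lam"

lemma Zl0: "Zl 0 = 0" by (simp add: Zl_def)

lemma G_fst: "\<forall>m\<in>ks G. fst m = 0" using Gk by blast
lemma G_deg: "\<forall>m\<in>ks G. mdeg m = j" using Gk by blast

lemma Gl_fst: "\<forall>m\<in>ks (G + Zl lam). fst m = 0"
  using G_fst keys_add_sub[of G "Zl lam"] by (auto simp: Zl_def split: if_splits)

lemma deg_all:
  "\<forall>m\<in>ks (G + Zl lam). mdeg m = j"
  "\<forall>m\<in>ks (G + W1). mdeg m = j"
  "\<forall>m\<in>ks (G + W1 + Zl lam). mdeg m = j"
proof -
  have z: "\<forall>m\<in>ks (Zl lam). mdeg m = j" by (auto simp: Zl_def)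
  have w: "\<forall>m\<in>ks W1. mdeg m = j" using j2 by (auto simp: W1_def)
  show "\<forall>m\<in>ks (G + Zl lam). mdeg m = j" using G_deg z keys_add_sub[of G "Zl lam"] by blast
  show gw: "\<forall>m\<in>ks (G + W1). mdeg m = j" using G_deg w keys_add_sub[of G W1] by blast
  show "\<forall>m\<in>ks (G + W1 + Zl lam). mdeg m = j" using gw z keys_add_sub[of "G + W1" "Zl lam"] by blast
qed

lemma high_Ann:
  assumes h: "h \<in> Rdeg i" and i: "j < i" and P: "\<forall>m\<in>ks P. mdeg m = j"
  shows "h \<in> Ann P"
  unfolding Ann_iff using contract_deg[OF h P] i by fastforce

lemma top_Ann:
  assumes h: "h \<in> Rdeg j" and P: "\<forall>m\<in>ks P. mdeg m = j"
  shows "h \<in> Ann P \<longleftrightarrow> contract h P 0 = 0"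
proof -
  have "contract h P c = 0" if "c \<noteq> 0" for c
    using contract_deg[OF h P, of c] that mdeg_zero_iff[of c] by auto
  then show ?thesis unfolding Ann_iff by metis
qed

lemma contract_Zl:
  assumes h: "h \<in> Rdeg i"
  shows "contract h (Zl lam) c = (if c = (0,0,0,j - i) \<and> i \<le> j then lk h (0,0,0,i) * lam else 0)"
  unfolding Zl_def by (rule contract_zsingle[OF h])

lemma contract_Zl_zero:
  assumes h: "h \<in> Rdeg i" and "lk h (0,0,0,i) = 0"
  shows "contract h (Zl lam) c = 0"
  using assms by (simp add: contract_Zl)

lemma low_cz:
  assumes h: "h \<in> Rdeg i" and i: "i < j" and hA: "h \<in> Ann (G + W1 + Zl lam)"
  shows "lk h (0,0,0,i) = 0"
proof -
  let ?c = "(1::nat,0::nat,0::nat,j - 1 - i)"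
  have "contract h (G + W1 + Zl lam) ?c = 0" using hA by (simp add: Ann_iff)
  moreover have "contract h G ?c = 0" by (rule contract_W[OF G_fst]) simp
  moreover have "contract h (Zl lam) ?c = 0" by (simp add: contract_Zl[OF h])
  moreover have "contract h W1 ?c = lk h (0,0,0,i)"
  proof -
    have "(0,0,0,i) + ?c = (1,0,0,j-1) \<and> mdeg (0,0,0,i) = i" using i by auto
    then have ex: "\<exists>a. a + ?c = (1,0,0,j-1) \<and> mdeg a = i" by blast
    have "(1,0,0,j-1) - ?c = ((0,0,0,i)::mon)" using i by auto
    then show ?thesis unfolding W1_def using ex by (simp add: contract_single_Rdeg[OF h])
  qed
  ultimately show ?thesis by (simp add: contract_add_right)
qed

lemma part1_low:
  assumes h: "h \<in> Rdeg i" and i: "i < j"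
  shows "h \<in> Ann (G + W1) \<longleftrightarrow> h \<in> Ann (G + W1 + Zl lam)"
    and "h \<in> Ann (G + W1) \<inter> Ann G \<longleftrightarrow> h \<in> Ann (G + W1 + Zl lam) \<inter> Ann (G + Zl lam)"
proof -
  have eq: "lk h (0,0,0,i) = 0 \<Longrightarrow> contract h (P + Zl lam) c = contract h P c" for P c
    by (simp add: contract_add_right contract_Zl_zero[OF h])
  have A: "h \<in> Ann (G + W1) \<Longrightarrow> lk h (0,0,0,i) = 0"
    using low_cz[OF h i, of 0] by (simp add: Zl0)
  have B: "h \<in> Ann (G + W1 + Zl lam) \<Longrightarrow> lk h (0,0,0,i) = 0"
    using low_cz[OF h i] by simp
  show "h \<in> Ann (G + W1) \<longleftrightarrow> h \<in> Ann (G + W1 + Zl lam)"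
    using A B eq unfolding Ann_iff by metis
  show "h \<in> Ann (G + W1) \<inter> Ann G \<longleftrightarrow> h \<in> Ann (G + W1 + Zl lam) \<inter> Ann (G + Zl lam)"
    using A B eq unfolding Ann_iff Int_iff by metis
qed

lemma lkG_mG: "lk G mG \<noteq> 0" using mG(1) by (simp add: in_keys_iff)

lemma lk_W1: "lk W1 m = (if m = (1,0,0,j-1) then 1 else 0)"
  by (simp add: W1_def lookup_single when_def)
lemma lk_Zl: "lk (Zl lam) m = (if m = (0,0,0,j) then lam else 0)"
  by (simp add: Zl_def lookup_single when_def)
lemma lk_G_W: "fst m \<noteq> 0 \<Longrightarrow> lk G m = 0"
proof -
  assume "fst m \<noteq> 0"
  then have "m \<notin> ks G" using G_fst by auto
  then show ?thesis by (simp add: in_keys_iff)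
qed
lemma mG_fst: "fst mG = 0" using G_fst mG(1) by blast
lemma mG_deg: "mdeg mG = j" using G_deg mG(1) by blast

lemma part1_top:
  "kv.dim (Ann (G + W1) \<inter> Rdeg j) = kv.dim (Ann (G + W1 + Zl lam) \<inter> Rdeg j)"
  "kv.dim (Ann (G + W1) \<inter> Ann G \<inter> Rdeg j) = kv.dim (Ann (G + W1 + Zl lam) \<inter> Ann (G + Zl lam) \<inter> Rdeg j)"
proof -
  let ?z = "(0::nat,0::nat,0::nat,j)" and ?w = "(1::nat,0::nat,0::nat,j-1)"
  have zdeg: "mdeg ?z = j" by simp
  have wdeg: "mdeg ?w = j" using j2 by simp
  have Rj_shift: "h + pscale t u \<in> Rdeg j \<longleftrightarrow> h \<in> Rdeg j" if u: "u \<in> Rdeg j" for h u t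
  proof
    assume "h + pscale t u \<in> Rdeg j"
    then have "h + pscale t u - pscale t u \<in> Rdeg j"
      using u by (intro kv.subspace_diff[OF subspace_Rdeg] kv.subspace_scale[OF subspace_Rdeg])
    then show "h \<in> Rdeg j" by simp
  qed (intro kv.subspace_add[OF subspace_Rdeg] kv.subspace_scale[OF subspace_Rdeg] u)
  have cZ: "contract h (Zl lam) 0 = lk h ?z * lam" for h
    unfolding Zl_def by (rule contract_single_right_hit) simp
  have cW: "contract h W1 0 = lk h ?w" for h
    unfolding W1_def by (simp add: contract_single_right_hit)
  let ?f1 = "\<lambda>h. - lam * lk h ?z" and ?u1 = "Poly_Mapping.single ?w (1::'k)"
  have f1: "addhom ?f1" by (intro addhom_scale addhom_lookup)
  have u1: "?f1 ?u1 = 0" by (simp add: lookup_single)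
  have u1R: "?u1 \<in> Rdeg j" by (rule single_in_Rdeg[OF wdeg])
  show "kv.dim (Ann (G + W1) \<inter> Rdeg j) = kv.dim (Ann (G + W1 + Zl lam) \<inter> Rdeg j)"
  proof (rule dim_shift[OF f1 u1])
    fix h :: "'k rpoly"
    show "h \<in> Ann (G + W1) \<inter> Rdeg j \<longleftrightarrow> h + pscale (?f1 h) ?u1 \<in> Ann (G + W1 + Zl lam) \<inter> Rdeg j"
    proof (cases "h \<in> Rdeg j")
      case True
      let ?h' = "h + pscale (?f1 h) ?u1"
      have h'R: "?h' \<in> Rdeg j" using Rj_shift[OF u1R, of h "?f1 h"] True by blast
      have "contract ?h' (G + W1 + Zl lam) 0 = contract h (G + W1) 0"
        by (simp add: contract_add_left contract_diff_left lookup_minus contract_scale_left contract_add_right cZ cW contract_single_left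
            lookup_add lk_W1 lk_Zl lk_G_W lookup_single)
      then show ?thesis
        using top_Ann[OF True deg_all(2)] top_Ann[OF h'R deg_all(3)] True h'R by simp
    next
      case False
      then show ?thesis using Rj_shift[OF u1R, of h "?f1 h"] by blast
    qed
  qed
  let ?f2 = "\<lambda>h. - lam / lk G mG * lk h ?z" and ?u2 = "Poly_Mapping.single mG (1::'k)"
  have f2: "addhom ?f2" by (intro addhom_scale addhom_lookup)
  have u2: "?f2 ?u2 = 0" using mG(2) by (simp add: lookup_single when_def)
  have u2R: "?u2 \<in> Rdeg j" by (rule single_in_Rdeg[OF mG_deg])
  have mGw: "mG \<noteq> ?w" using mG_fst by auto
  show "kv.dim (Ann (G + W1) \<inter> Ann G \<inter> Rdeg j) = kv.dim (Ann (G + W1 + Zl lam) \<inter> Ann (G + Zl lam) \<inter> Rdeg j)"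
  proof (rule dim_shift[OF f2 u2])
    fix h :: "'k rpoly"
    show "h \<in> Ann (G + W1) \<inter> Ann G \<inter> Rdeg j \<longleftrightarrow> h + pscale (?f2 h) ?u2 \<in> Ann (G + W1 + Zl lam) \<inter> Ann (G + Zl lam) \<inter> Rdeg j"
    proof (cases "h \<in> Rdeg j")
      case True
      let ?h' = "h + pscale (?f2 h) ?u2"
      have h'R: "?h' \<in> Rdeg j" using Rj_shift[OF u2R, of h "?f2 h"] True by blast
      have e1: "contract ?h' (G + W1 + Zl lam) 0 = contract h (G + W1) 0"
        using lkG_mG mG(2) mGw
        by (simp add: contract_add_left contract_diff_left lookup_minus contract_scale_left contract_add_right cZ cW contract_single_left
            lookup_add lk_W1 lk_Zl lookup_single when_def)
      have e2: "contract ?h' (G + Zl lam) 0 = contract h G 0"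
        using lkG_mG mG(2) mGw
        by (simp add: contract_add_left contract_diff_left lookup_minus contract_scale_left contract_add_right cZ contract_single_left
            lookup_add lk_Zl lookup_single when_def)
      show ?thesis
        using top_Ann[OF True deg_all(2)] top_Ann[OF h'R deg_all(3)] top_Ann[OF True G_deg]
          top_Ann[OF h'R deg_all(1)] True h'R e1 e2 by simp
    next
      case False
      then show ?thesis using Rj_shift[OF u2R, of h "?f2 h"] by blast
    qed
  qed
qed

end


definition Qp :: "'k::field dppoly \<Rightarrow> nat \<Rightarrow> bool" where
  "Qp P a \<longleftrightarrow> (\<exists>h\<in>Ann P \<inter> Rdeg a. lk h (0,0,0,a) \<noteq> 0)"

definition wf :: "'k::comm_ring_1 rpoly \<Rightarrow> 'k rpoly" where
  "wf h = (\<Sum>m\<in>{m\<in>ks h. fst m = 0}. Poly_Mapping.single m (lk h m))"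

lemma lookup_wf: "lk (wf h) x = (if fst x = 0 then lk h x else 0)"
proof -
  have "lk (wf h) x = (\<Sum>m\<in>{m\<in>ks h. fst m = 0}. (lk h m when m = x))"
    by (simp add: wf_def lookup_sum lookup_single)
  also have "\<dots> = (\<Sum>m\<in>{m\<in>ks h. fst m = 0}. (if m = x then lk h m else 0))"
    by (intro sum.cong refl) (auto simp: when_def)
  also have "\<dots> = (if fst x = 0 then lk h x else 0)"
    by (simp add: sum.delta in_keys_iff)
  finally show ?thesis .
qed

lemma keys_wf: "ks (wf h) \<subseteq> ks h"
  by (auto simp: in_keys_iff lookup_wf split: if_splits)

lemma wf_Kxyz: "wf h \<in> Kxyz"
  by (auto simp: Kxyz_def in_keys_iff lookup_wf split: if_splits)

lemma wf_Rdeg: "h \<in> Rdeg a \<Longrightarrow> wf h \<in> Rdeg a"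
  using keys_wf by (auto simp: Rdeg_def homog_def)

lemma contract_wf:
  assumes P: "\<forall>m\<in>ks P. fst m = 0"
  shows "contract (wf h) P c = contract h P c"
proof -
  have "contract (wf h) P c = (\<Sum>a\<in>ks h. lk (wf h) a * lk P (a + c))"
    by (rule contract_superset[OF _ keys_wf]) simp
  also have "\<dots> = (\<Sum>a\<in>ks h. lk h a * lk P (a + c))"
  proof (intro sum.cong refl)
    fix a assume "a \<in> ks h"
    show "lk (wf h) a * lk P (a + c) = lk h a * lk P (a + c)"
    proof (cases "fst a = 0")
      case False
      then have "a + c \<notin> ks P" using P by auto
      then show ?thesis by (simp add: in_keys_iff)
    qed (simp add: lookup_wf)
  qed
  finally show ?thesis by (simp add: contract_def)
qed

lemma ideal_xy_noz: "p \<in> ideal_xy \<Longrightarrow> lk p (0,0,0,d) = 0"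
proof -
  assume "p \<in> ideal_xy"
  then obtain q r where p: "p = vx * q + vy * r" by (auto simp: ideal_xy_def)
  have "(0,0,0,d) \<notin> ks (vx * q)"
    using keys_mult[of vx q] by (auto simp: vx_def)
  moreover have "(0,0,0,d) \<notin> ks (vy * r)"
    using keys_mult[of vy r] by (auto simp: vy_def)
  ultimately show ?thesis by (simp add: p lookup_add in_keys_iff)
qed

lemma ideal_xy_construct:
  fixes h :: "'k::comm_ring_1 rpoly"
  assumes K: "h \<in> Kxyz" and R: "h \<in> Rdeg a" and z: "lk h (0,0,0,a) = 0"
  shows "h \<in> ideal_xy"
proof -
  let ?ex = "(0::nat,1::nat,0::nat,0::nat)" and ?ey = "(0::nat,0::nat,1::nat,0::nat)"
  define A1 where "A1 = {m\<in>ks h. fst (snd m) \<noteq> 0}"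
  define A2 where "A2 = {m\<in>ks h. fst (snd m) = 0}"
  define p where "p = (\<Sum>m\<in>A1. Poly_Mapping.single (m - ?ex) (lk h m))"
  define q where "q = (\<Sum>m\<in>A2. Poly_Mapping.single (m - ?ey) (lk h m))"
  have fin: "finite A1" "finite A2" by (auto simp: A1_def A2_def)
  have hk: "m \<in> ks h \<Longrightarrow> fst m = 0" for m using K by (auto simp: Kxyz_def)
  have "vx * p = (\<Sum>m\<in>A1. vx * Poly_Mapping.single (m - ?ex) (lk h m))"
    by (simp add: p_def sum_distrib_left)
  also have "\<dots> = (\<Sum>m\<in>A1. Poly_Mapping.single m (lk h m))"
  proof (intro sum.cong refl)
    fix m assume "m \<in> A1"
    then have "?ex + (m - ?ex) = m" by (cases m) (auto simp: A1_def)
    then show "vx * Poly_Mapping.single (m - ?ex) (lk h m) = Poly_Mapping.single m (lk h m)"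
      by (simp add: vx_def mult_single)
  qed
  finally have px: "vx * p = (\<Sum>m\<in>A1. Poly_Mapping.single m (lk h m))" .
  have "vy * q = (\<Sum>m\<in>A2. vy * Poly_Mapping.single (m - ?ey) (lk h m))"
    by (simp add: q_def sum_distrib_left)
  also have "\<dots> = (\<Sum>m\<in>A2. Poly_Mapping.single m (lk h m))"
  proof (intro sum.cong refl)
    fix m assume m: "m \<in> A2"
    obtain m1 m2 m3 m4 where mm: "m = (m1,m2,m3,m4)" by (cases m) auto
    have "m1 = 0" "m2 = 0" using m hk mm by (auto simp: A2_def)
    moreover have "mdeg m = a" using m R by (auto simp: A2_def intro: in_RdegD)
    moreover have "m \<noteq> (0,0,0,a)" using m z by (auto simp: A2_def in_keys_iff)
    ultimately have "m3 \<noteq> 0" using mm by auto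
    then have "?ey + (m - ?ey) = m" using mm by auto
    then show "vy * Poly_Mapping.single (m - ?ey) (lk h m) = Poly_Mapping.single m (lk h m)"
      by (simp add: vy_def mult_single)
  qed
  finally have qy: "vy * q = (\<Sum>m\<in>A2. Poly_Mapping.single m (lk h m))" .
  have "vx * p + vy * q = (\<Sum>m\<in>A1 \<union> A2. Poly_Mapping.single m (lk h m))"
    using fin by (simp add: px qy sum.union_disjoint A1_def A2_def disjoint_iff)
  also have "A1 \<union> A2 = ks h" by (auto simp: A1_def A2_def)
  finally have hpq: "h = vx * p + vy * q" using poly_as_sum[of h] by simp
  have pK: "p \<in> Kxyz"
  proof -
    have "ks p \<subseteq> (\<Union>m\<in>A1. ks (Poly_Mapping.single (m - ?ex) (lk h m)))"
      unfolding p_def by (rule keys_sum)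
    then show ?thesis using hk by (auto simp: Kxyz_def A1_def split: if_splits)
  qed
  have qK: "q \<in> Kxyz"
  proof -
    have "ks q \<subseteq> (\<Union>m\<in>A2. ks (Poly_Mapping.single (m - ?ey) (lk h m)))"
      unfolding q_def by (rule keys_sum)
    then show ?thesis using hk by (auto simp: Kxyz_def A2_def split: if_splits)
  qed
  show ?thesis unfolding ideal_xy_def using hpq pK qK by blast
qed

lemma alpha_char:
  fixes P :: "'k::field dppoly"
  assumes P: "\<forall>m\<in>ks P. fst m = 0" and a: "1 \<le> a"
  shows "(\<not> (Ann P \<inter> Kxyz \<inter> Rdeg a \<subseteq> ideal_xy)) \<longleftrightarrow> Qp P a"
proof
  assume "\<not> (Ann P \<inter> Kxyz \<inter> Rdeg a \<subseteq> ideal_xy)"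
  then obtain h where h: "h \<in> Ann P" "h \<in> Kxyz" "h \<in> Rdeg a" "h \<notin> ideal_xy" by blast
  then have "lk h (0,0,0,a) \<noteq> 0" using ideal_xy_construct by blast
  then show "Qp P a" using h unfolding Qp_def by blast
next
  assume "Qp P a"
  then obtain h where h: "h \<in> Ann P" "h \<in> Rdeg a" "lk h (0,0,0,a) \<noteq> 0" unfolding Qp_def by blast
  have "wf h \<in> Ann P" using h(1) contract_wf[OF P] by (simp add: Ann_iff)
  moreover have "lk (wf h) (0,0,0,a) \<noteq> 0" using h(3) by (simp add: lookup_wf)
  ultimately show "\<not> (Ann P \<inter> Kxyz \<inter> Rdeg a \<subseteq> ideal_xy)"
    using wf_Kxyz wf_Rdeg[OF h(2)] ideal_xy_noz by blast
qed

lemma alpha_eq: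
  fixes P :: "'k::field dppoly"
  assumes P: "\<forall>m\<in>ks P. fst m = 0"
  shows "alpha (Ann P) = (LEAST a. 1 \<le> a \<and> Qp P a)"
  unfolding alpha_def using alpha_char[OF P] by metis

lemma Qp_up:
  assumes Q: "Qp P a" and ab: "a \<le> b"
  shows "Qp P b"
proof -
  obtain h where h: "h \<in> Ann P" "h \<in> Rdeg a" "lk h (0,0,0,a) \<noteq> 0" using Q unfolding Qp_def by blast
  let ?s = "(0::nat,0::nat,0::nat,b - a)"
  have "shiftp ?s h \<in> Rdeg (a + mdeg ?s)" by (rule shiftp_Rdeg[OF h(2)])
  then have R: "shiftp ?s h \<in> Rdeg b" using ab by simp
  have A: "shiftp ?s h \<in> Ann P" using h(1) by (simp add: Ann_iff contract_shiftp)
  have "lk (shiftp ?s h) ((0,0,0,a) + ?s) = lk h (0,0,0,a)" by (rule lookup_shiftp)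
  then have "lk (shiftp ?s h) (0,0,0,b) \<noteq> 0" using h(3) ab by simp
  then show ?thesis using R A unfolding Qp_def by blast
qed

lemma Qp_high:
  assumes P: "\<forall>m\<in>ks P. mdeg m = j"
  shows "Qp (P :: 'k::field dppoly) (j + 1)"
proof -
  let ?h = "Poly_Mapping.single (0,0,0,j+1) (1::'k)"
  have R: "?h \<in> Rdeg (j+1)" by (rule single_in_Rdeg) simp
  have "?h \<in> Ann P" unfolding Ann_iff using contract_deg[OF R P] by fastforce
  then show ?thesis using R unfolding Qp_def by force
qed


context setting
begin

definition al :: nat where "al = alpha (Ann G)"

lemma al_Least: "al = (LEAST a. 1 \<le> a \<and> Qp G a)"
  unfolding al_def by (rule alpha_eq[OF G_fst])

lemma al_props: "1 \<le> al" "Qp G al" "al \<le> j + 1"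
proof -
  have ex: "1 \<le> j + 1 \<and> Qp G (j + 1)" using Qp_high[OF G_deg] by simp
  have "1 \<le> al \<and> Qp G al" unfolding al_Least by (rule LeastI[of _ "j+1"]) (rule ex)
  then show "1 \<le> al" "Qp G al" by auto
  show "al \<le> j + 1" unfolding al_Least by (rule Least_le) (rule ex)
qed

lemma al_min: "1 \<le> a \<Longrightarrow> a < al \<Longrightarrow> \<not> Qp G a"
  unfolding al_Least using not_less_Least by blast

lemma contract_R0:
  assumes h: "h \<in> Rdeg 0"
  shows "contract h P c = lk h 0 * lk P c"
proof -
  have "ks h \<subseteq> {0}" using h by (auto simp: Rdeg_def homog_def mdeg_zero_iff)
  then show ?thesis by (simp add: contract_superset[of "{0}"])
qed

lemma NQ:
  assumes i: "i < al" and h: "h \<in> Ann G" "h \<in> Rdeg i"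
  shows "lk h (0,0,0,i) = 0"
proof (cases "i = 0")
  case True
  have "contract h G mG = 0" using h(1) unfolding Ann_iff by blast
  then have "lk h 0 = 0" using contract_R0[of h G mG] h(2) True lkG_mG by simp
  then show ?thesis using True by (simp add: zero_prod_def)
next
  case False
  then have "\<not> Qp G i" using al_min i by simp
  then show ?thesis using h unfolding Qp_def by blast
qed

lemma Qup:
  assumes i: "al \<le> i"
  obtains k where "k \<in> Ann G" "k \<in> Rdeg i" "lk k (0,0,0,i) = 1"
proof -
  have "Qp G i" using Qp_up[OF al_props(2) i] .
  then obtain h where h: "h \<in> Ann G" "h \<in> Rdeg i" "lk h (0,0,0,i) \<noteq> 0" unfolding Qp_def by blast
  let ?k = "pscale (1 / lk h (0,0,0,i)) h"
  have "?k \<in> Ann G" using h(1) kv.subspace_scale[OF subspace_Ann] by blast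
  moreover have "?k \<in> Rdeg i" using h(2) kv.subspace_scale[OF subspace_Rdeg] by blast
  moreover have "lk ?k (0,0,0,i) = 1" using h(3) by simp
  ultimately show ?thesis using that by blast
qed

definition E :: "nat \<Rightarrow> mon \<Rightarrow> 'k" where "E n = (\<lambda>c. if c = (0,0,0,n) then 1 else 0)"

lemma NoEx:
  assumes i: "i \<le> j" and a: "al \<le> j - i" and h: "h \<in> Rdeg i"
    and t: "\<And>c. contract h G c = t * E (j - i) c"
  shows "t = 0"
proof -
  obtain g where g: "g \<in> Ann G" "g \<in> Rdeg (j - i)" "lk g (0,0,0,j-i) = 1" using Qup[OF a] by blast
  have "(\<Sum>a\<in>ks g. lk g a * contract h G a) = (\<Sum>b\<in>ks h. lk h b * contract g G b)"
    by (rule pairing)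
  also have "\<dots> = 0"
  proof -
    have "\<And>b. contract g G b = 0" using g(1) unfolding Ann_iff by blast
    then show ?thesis by (simp del: split_paired_All)
  qed
  finally have s0: "(\<Sum>a\<in>ks g. lk g a * contract h G a) = 0" .
  have "(\<Sum>a\<in>ks g. lk g a * contract h G a) = (\<Sum>a\<in>ks g. if a = (0,0,0,j-i) then lk g a * t else 0)"
    by (intro sum.cong refl) (simp add: t E_def)
  also have "\<dots> = t" using g(3) by (simp add: sum.delta in_keys_iff)
  finally show "t = 0" using s0 by simp
qed

end


context setting
begin

lemma YesEx:
  assumes i: "i \<le> j" and a: "j - i < al"
  obtains h where "h \<in> Rdeg i" "\<And>c. contract h G c = E (j - i) c"
proof -
  define m where "m = j - i"
  define L where "L g = (\<Sum>b\<in>monsof i. pscale (contract g G b) (Poly_Mapping.single b (1::'k)))" for g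
  have lkL: "lk (L g) y = (if y \<in> monsof i then contract g G y else 0)" for g y
  proof -
    have "lk (L g) y = (\<Sum>b\<in>monsof i. if b = y then contract g G b else 0)"
      by (simp add: L_def lookup_sum lookup_single when_def if_distrib cong: if_cong)
    also have "\<dots> = (if y \<in> monsof i then contract g G y else 0)"
      using finite_monsof by (simp add: sum.delta')
    finally show ?thesis .
  qed
  have linL: "Vector_Spaces.linear pscale pscale L"
    unfolding Vector_Spaces.linear_iff
  proof (intro conjI allI)
    show "vector_space (pscale :: 'k \<Rightarrow> _)" by (rule kv.vector_space_axioms)
    show "vector_space (pscale :: 'k \<Rightarrow> _)" by (rule kv.vector_space_axioms)
    fix x y :: "'k rpoly" and c :: 'k
    show "L (x + y) = L x + L y"
      by (rule poly_mapping_eqI) (simp add: lkL lookup_add contract_add_left)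
    show "L (pscale c x) = pscale c (L x)"
      by (rule poly_mapping_eqI) (simp add: lkL contract_scale_left)
  qed
  have ker: "lk g (0,0,0,m) = 0" if g: "g \<in> Rdeg m" "L g = 0" for g
  proof -
    have "g \<in> Ann G"
      unfolding Ann_iff
    proof
      fix c
      show "contract g G c = 0"
      proof (cases "c \<in> monsof i")
        case True
        then show ?thesis using lkL[of g c] g(2) by simp
      next
        case False
        then have "m + mdeg c \<noteq> j" using i by (auto simp: monsof_def m_def)
        then show ?thesis using contract_deg[OF g(1) G_deg] by blast
      qed
    qed
    then show ?thesis using NQ[of m g] a g(1) by (simp add: m_def)
  qed
  obtain R where R: "R ` UNIV \<subseteq> Rdeg m" "Vector_Spaces.linear pscale pscale R"
      "\<forall>v\<in>L ` Rdeg m. L (R v) = v"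
    using kvp.linear_exists_right_inverse_on[OF linL subspace_Rdeg] by blast
  define \<phi> where "\<phi> v = lk (R v) (0,0,0,m)" for v
  have key: "lk g (0,0,0,m) = \<phi> (L g)" if g: "g \<in> Rdeg m" for g
  proof -
    let ?g' = "R (L g)"
    have g'R: "?g' \<in> Rdeg m" using R(1) by blast
    have "L ?g' = L g" using R(3) g by blast
    then have "L (?g' - g) = 0" using kvp.linear_diff[OF linL] by simp
    moreover have "?g' - g \<in> Rdeg m" using g'R g by (rule kv.subspace_diff[OF subspace_Rdeg])
    ultimately have "lk (?g' - g) (0,0,0,m) = 0" using ker by blast
    then show ?thesis by (simp add: \<phi>_def lookup_minus)
  qed
  have phi_sum: "\<phi> (\<Sum>b\<in>monsof i. pscale (f b) (Poly_Mapping.single b 1)) =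
      (\<Sum>b\<in>monsof i. f b * \<phi> (Poly_Mapping.single b 1))" for f
  proof -
    have "R (\<Sum>b\<in>monsof i. pscale (f b) (Poly_Mapping.single b 1)) =
        (\<Sum>b\<in>monsof i. pscale (f b) (R (Poly_Mapping.single b 1)))"
      unfolding kvp.linear_sum[OF R(2)] kvp.linear_scale[OF R(2)] by (rule refl)
    then show ?thesis by (simp add: \<phi>_def lookup_sum)
  qed
  define h where "h = (\<Sum>b\<in>monsof i. Poly_Mapping.single b (\<phi> (Poly_Mapping.single b (1::'k))))"
  have hR: "h \<in> Rdeg i"
    unfolding h_def by (rule kv.subspace_sum[OF subspace_Rdeg]) (simp add: single_in_Rdeg monsof_def)
  have ch: "contract h G c = (\<Sum>b\<in>monsof i. \<phi> (Poly_Mapping.single b 1) * lk G (b + c))" for c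
    unfolding h_def using finite_monsof by (simp add: contract_sum_left contract_single_left)
  have "contract h G c = E m c" for c
  proof (cases "mdeg c = m")
    case True
    let ?g = "Poly_Mapping.single c (1::'k)"
    have gR: "?g \<in> Rdeg m" using True by (rule single_in_Rdeg)
    have "L ?g = (\<Sum>b\<in>monsof i. pscale (lk G (c + b)) (Poly_Mapping.single b 1))"
      by (simp add: L_def contract_single_left)
    then have "\<phi> (L ?g) = (\<Sum>b\<in>monsof i. lk G (c + b) * \<phi> (Poly_Mapping.single b 1))"
      by (simp add: phi_sum)
    also have "\<dots> = contract h G c" by (simp add: ch add.commute mult.commute)
    finally have "contract h G c = lk ?g (0,0,0,m)" using key[OF gR] by simp
    then show ?thesis by (simp add: E_def lookup_single when_def eq_commute)
  next
    case nd: False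
    have "E m c = 0" using nd by (auto simp: E_def)
    moreover have "contract h G c = 0"
    proof (rule ccontr)
      assume "contract h G c \<noteq> 0"
      then have "i + mdeg c = j" by (rule contract_deg[OF hR G_deg])
      then show False using nd by (simp add: m_def)
    qed
    ultimately show ?thesis by simp
  qed
  then show ?thesis using that hR by (simp add: m_def)
qed

end


declare split_paired_All [simp del] split_paired_Ex [simp del]

lemma Rdeg_shift:
  assumes u: "u \<in> Rdeg i"
  shows "h + pscale t u \<in> Rdeg i \<longleftrightarrow> h \<in> Rdeg i"
proof
  assume "h + pscale t u \<in> Rdeg i"
  then have "h + pscale t u - pscale t u \<in> Rdeg i"
    using u by (intro kv.subspace_diff[OF subspace_Rdeg] kv.subspace_scale[OF subspace_Rdeg])
  then show "h \<in> Rdeg i" by simp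
qed (intro kv.subspace_add[OF subspace_Rdeg] kv.subspace_scale[OF subspace_Rdeg] u)

context setting
begin

lemma contract_Gl_E:
  assumes h: "h \<in> Rdeg i" and i: "i \<le> j"
  shows "contract h (G + Zl lam) c = contract h G c + lk h (0,0,0,i) * lam * E (j - i) c"
  using i by (simp add: contract_add_right contract_Zl[OF h] E_def)

lemma Nl_cz:
  assumes h: "h \<in> Rdeg i" and i: "i \<le> j" and a: "al \<le> j - i" and lam: "lam \<noteq> 0"
    and hA: "h \<in> Ann (G + Zl lam)"
  shows "lk h (0,0,0,i) = 0" "h \<in> Ann G"
proof -
  have "contract h G c = (- (lk h (0,0,0,i) * lam)) * E (j - i) c" for c
    using hA contract_Gl_E[OF h i, of lam c] unfolding Ann_iff by (simp add: eq_neg_iff_add_eq_0)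
  then have "- (lk h (0,0,0,i) * lam) = 0" by (rule NoEx[OF i a h])
  then show z: "lk h (0,0,0,i) = 0" using lam by simp
  show "h \<in> Ann G"
    using hA contract_Gl_E[OF h i, of lam] z unfolding Ann_iff by simp
qed

lemma Nl_back:
  assumes h: "h \<in> Rdeg i" and hA: "h \<in> Ann G" and z: "lk h (0,0,0,i) = 0"
  shows "h \<in> Ann (G + Zl lam)"
  using hA z unfolding Ann_iff by (simp add: contract_add_right contract_Zl_zero[OF h])

lemma claimA:
  assumes lam: "lam \<noteq> 0" and aj: "2 * al \<le> j"
  shows "kv.dim (Ann G \<inter> Rdeg i) = kv.dim (Ann (G + Zl lam) \<inter> Rdeg i) + (if al \<le> i \<and> i \<le> j - al then 1 else 0)"
proof -
  have al1: "1 \<le> al" by (rule al_props)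
  consider (hi) "j < i" | (lo) "i \<le> j" "i < al" | (mid) "al \<le> i" "i \<le> j - al" | (top) "j - al < i" "i \<le> j"
    by linarith
  then show ?thesis
  proof cases
    case hi
    have "Ann G \<inter> Rdeg i = Ann (G + Zl lam) \<inter> Rdeg i"
      using high_Ann[OF _ hi G_deg] high_Ann[OF _ hi deg_all(1)] by blast
    moreover have "\<not> (al \<le> i \<and> i \<le> j - al)" using hi al1 by linarith
    ultimately show ?thesis by simp
  next
    case lo
    have a: "al \<le> j - i" using lo aj by linarith
    have "Ann G \<inter> Rdeg i = Ann (G + Zl lam) \<inter> Rdeg i"
      using Nl_cz[OF _ lo(1) a lam] Nl_back NQ[OF lo(2)] by blast
    then show ?thesis using lo by simp
  next
    case mid
    have ij: "i \<le> j" using mid aj by linarith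
    have a: "al \<le> j - i" using mid aj by linarith
    obtain k where k: "k \<in> Ann G" "k \<in> Rdeg i" "lk k (0,0,0,i) = 1" using Qup[OF mid(1)] by blast
    have "kv.dim (Ann G \<inter> Rdeg i) = kv.dim (Ann (G + Zl lam) \<inter> Rdeg i) + 1"
    proof (rule dim_codim1[where f = "\<lambda>h. lk h (0,0,0,i)" and k = k])
      show "kv.subspace (Ann G \<inter> Rdeg i)" by (intro kv.subspace_inter subspace_Ann subspace_Rdeg)
      show "Ann G \<inter> Rdeg i \<subseteq> Rdeg i" by blast
      show "addhom (\<lambda>h. lk h (0,0,0,i))" by (rule addhom_lookup)
      show "k \<in> Ann G \<inter> Rdeg i" using k by blast
      show "lk k (0,0,0,i) \<noteq> 0" using k by simp
      show "Ann (G + Zl lam) \<inter> Rdeg i = Ann G \<inter> Rdeg i \<inter> {h. lk h (0,0,0,i) = 0}"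
        using Nl_cz[OF _ ij a lam] Nl_back by blast
    qed
    then show ?thesis using mid by simp
  next
    case top
    have a: "j - i < al" using top by linarith
    have ai: "al \<le> i" using top aj by linarith
    obtain h1 where h1: "h1 \<in> Rdeg i" "\<And>c. contract h1 G c = E (j - i) c"
      using YesEx[OF top(2) a] by blast
    obtain k where k: "k \<in> Ann G" "k \<in> Rdeg i" "lk k (0,0,0,i) = 1" using Qup[OF ai] by blast
    define h2 where "h2 = h1 - pscale (lk h1 (0,0,0,i)) k"
    have h2R: "h2 \<in> Rdeg i" unfolding h2_def
      using h1(1) k(2) by (intro kv.subspace_diff[OF subspace_Rdeg] kv.subspace_scale[OF subspace_Rdeg])
    have h2c: "contract h2 G c = E (j - i) c" for c
    proof -
      have "contract k G c = 0" using k(1) unfolding Ann_iff by blast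
      then show ?thesis by (simp add: h2_def contract_diff_left contract_scale_left h1(2))
    qed
    have h2z: "lk h2 (0,0,0,i) = 0" using k(3) by (simp add: h2_def lookup_minus)
    have "kv.dim (Ann (G + Zl lam) \<inter> Rdeg i) = kv.dim (Ann G \<inter> Rdeg i)"
    proof (rule dim_shift[where f = "\<lambda>h. lam * lk h (0,0,0,i)" and u = h2])
      show "addhom (\<lambda>h. lam * lk h (0,0,0,i))" by (intro addhom_scale addhom_lookup)
      show "lam * lk h2 (0,0,0,i) = 0" using h2z by simp
      fix h :: "'k rpoly"
      let ?h' = "h + pscale (lam * lk h (0,0,0,i)) h2"
      show "h \<in> Ann (G + Zl lam) \<inter> Rdeg i \<longleftrightarrow> ?h' \<in> Ann G \<inter> Rdeg i"
      proof (cases "h \<in> Rdeg i")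
        case True
        have "contract ?h' G c = contract h (G + Zl lam) c" for c
          using contract_Gl_E[OF True top(2), of lam c]
          by (simp add: contract_add_left contract_scale_left h2c mult.commute)
        then have "?h' \<in> Ann G \<longleftrightarrow> h \<in> Ann (G + Zl lam)" unfolding Ann_iff by simp
        then show ?thesis using True Rdeg_shift[OF h2R, of h "lam * lk h (0,0,0,i)"] by blast
      next
        case False
        then show ?thesis using Rdeg_shift[OF h2R, of h "lam * lk h (0,0,0,i)"] by blast
      qed
    qed
    then show ?thesis using top aj by simp
  qed
qed

end


lemma addhom_add: "addhom f \<Longrightarrow> addhom g \<Longrightarrow> addhom (\<lambda>h. f h + g h)"
  by (simp add: addhom_def algebra_simps)

lemma subspace_allker: "(\<And>c. addhom (\<phi> c)) \<Longrightarrow> kv.subspace {h. \<forall>c. \<phi> c h = 0}"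
proof -
  assume a: "\<And>c. addhom (\<phi> c)"
  have "\<phi> c 0 = 0" for c using addhom_zero[OF a] .
  moreover have "\<phi> c (x + y) = \<phi> c x + \<phi> c y" for c x y using a[of c] by (simp add: addhom_def)
  moreover have "\<phi> c (pscale t x) = t * \<phi> c x" for c t x using a[of c] by (simp add: addhom_def)
  ultimately show ?thesis unfolding kv.subspace_def by simp
qed

context setting
begin

lemma h2_exists:
  assumes i: "i \<le> j" and a: "j - i < al" and ai: "al \<le> i"
  obtains h2 where "h2 \<in> Rdeg i" "\<And>c. contract h2 G c = E (j - i) c" "lk h2 (0,0,0,i) = 0"
proof -
  obtain h1 where h1: "h1 \<in> Rdeg i" "\<And>c. contract h1 G c = E (j - i) c"
    using YesEx[OF i a] by blast
  obtain k where k: "k \<in> Ann G" "k \<in> Rdeg i" "lk k (0,0,0,i) = 1" using Qup[OF ai] by blast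
  define h2 where "h2 = h1 - pscale (lk h1 (0,0,0,i)) k"
  have h2R: "h2 \<in> Rdeg i" unfolding h2_def
    using h1(1) k(2) by (intro kv.subspace_diff[OF subspace_Rdeg] kv.subspace_scale[OF subspace_Rdeg])
  have h2c: "contract h2 G c = E (j - i) c" for c
  proof -
    have "contract k G c = 0" using k(1) unfolding Ann_iff by blast
    then show ?thesis by (simp add: h2_def contract_diff_left contract_scale_left h1(2))
  qed
  have h2z: "lk h2 (0,0,0,i) = 0" using k(3) by (simp add: h2_def lookup_minus)
  show ?thesis using that h2R h2c h2z by blast
qed

lemma claimB:
  assumes lam: "lam \<noteq> 0" and aj: "2 * al \<le> j"
  shows "alpha (Ann (G + Zl lam)) = j + 1 - al"
  unfolding alpha_eq[OF Gl_fst]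
proof (rule Least_equality)
  have al1: "1 \<le> al" by (rule al_props)
  let ?b = "j + 1 - al"
  have b1: "1 \<le> ?b" "?b \<le> j" using aj al1 by linarith+
  have a: "j - ?b < al" using aj al1 by linarith
  have ai: "al \<le> ?b" using aj by linarith
  obtain h2 where h2: "h2 \<in> Rdeg ?b" "\<And>c. contract h2 G c = E (j - ?b) c" "lk h2 (0,0,0,?b) = 0"
    using h2_exists[OF b1(2) a ai] by blast
  obtain k where k: "k \<in> Ann G" "k \<in> Rdeg ?b" "lk k (0,0,0,?b) = 1" using Qup[OF ai] by blast
  define h where "h = k - pscale lam h2"
  have hR: "h \<in> Rdeg ?b" unfolding h_def
    using h2(1) k(2) by (intro kv.subspace_diff[OF subspace_Rdeg] kv.subspace_scale[OF subspace_Rdeg])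
  have hz: "lk h (0,0,0,?b) = 1" using k(3) h2(3) by (simp add: h_def lookup_minus)
  have "contract h (G + Zl lam) c = 0" for c
  proof -
    have "contract k G c = 0" using k(1) unfolding Ann_iff by blast
    then show ?thesis
      using contract_Gl_E[OF hR b1(2), of lam c] hz
      by (simp add: h_def contract_diff_left contract_scale_left h2(2))
  qed
  then have hA: "h \<in> Ann (G + Zl lam)" unfolding Ann_iff by blast
  have "Qp (G + Zl lam) ?b" unfolding Qp_def
    by (rule bexI[of _ h]) (use hz hA hR in auto)
  then show "1 \<le> ?b \<and> Qp (G + Zl lam) ?b" using b1 by blast
next
  fix a assume a: "1 \<le> a \<and> Qp (G + Zl lam) a"
  show "j + 1 - al \<le> a"
  proof (rule ccontr)
    assume "\<not> j + 1 - al \<le> a"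
    then have aj2: "a \<le> j" "al \<le> j - a" using aj by linarith+
    obtain h where h: "h \<in> Ann (G + Zl lam)" "h \<in> Rdeg a" "lk h (0,0,0,a) \<noteq> 0"
      using a unfolding Qp_def by blast
    show False using Nl_cz(1)[OF h(2) aj2 lam h(1)] h(3) by simp
  qed
qed

lemma contract_W1:
  assumes h: "h \<in> Rdeg i" and i: "1 \<le> i" "i \<le> j - 1"
  shows "contract h W1 c = lk h (0,0,0,i) * (if c = (1,0,0,j - 1 - i) then 1 else 0) + lk h (1,0,0,i-1) * E (j - i) c"
proof -
  have "contract h W1 c = (if c = (1,0,0,j - 1 - i) \<and> i \<le> j - 1 then lk h (0,0,0,i) * 1 else 0) +
    (if c = (0,0,0,j - 1 + 1 - i) \<and> i \<le> j - 1 + 1 then lk h (1,0,0,i - 1) * 1 else 0)"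
    unfolding W1_def by (rule contract_wsingle[OF h i(1)])
  moreover have "j - 1 + 1 = j" using j2 by simp
  ultimately show ?thesis using i by (simp add: E_def)
qed

lemma Ml_char:
  assumes h: "h \<in> Rdeg i" and i: "1 \<le> i" "i \<le> j - 1"
  shows "h \<in> Ann (G + W1 + Zl lam) \<longleftrightarrow>
    lk h (0,0,0,i) = 0 \<and> (\<forall>c. contract h (G + Zl lam) c + lk h (1,0,0,i-1) * E (j - i) c = 0)"
proof -
  have split: "contract h (G + W1 + Zl lam) c = contract h (G + Zl lam) c +
      (lk h (0,0,0,i) * (if c = (1,0,0,j - 1 - i) then 1 else 0) + lk h (1,0,0,i-1) * E (j - i) c)" for c
    by (simp add: contract_add_right contract_W1[OF h i] algebra_simps)
  show ?thesis
  proof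
    assume A: "h \<in> Ann (G + W1 + Zl lam)"
    let ?c0 = "(1::nat,0::nat,0::nat,j - 1 - i)"
    have "contract h (G + Zl lam) ?c0 = 0" by (rule contract_W[OF Gl_fst]) simp
    moreover have "E (j - i) ?c0 = 0" by (simp add: E_def)
    moreover have "contract h (G + W1 + Zl lam) ?c0 = 0" using A unfolding Ann_iff by blast
    ultimately have z: "lk h (0,0,0,i) = 0" using split[of ?c0] by simp
    have "\<forall>c. contract h (G + Zl lam) c + lk h (1,0,0,i-1) * E (j - i) c = 0"
      using A split z unfolding Ann_iff by simp
    then show "lk h (0,0,0,i) = 0 \<and> (\<forall>c. contract h (G + Zl lam) c + lk h (1,0,0,i-1) * E (j - i) c = 0)"
      using z by blast
  next
    assume "lk h (0,0,0,i) = 0 \<and> (\<forall>c. contract h (G + Zl lam) c + lk h (1,0,0,i-1) * E (j - i) c = 0)"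
    then show "h \<in> Ann (G + W1 + Zl lam)" using split unfolding Ann_iff by simp
  qed
qed

end


context setting
begin

lemma claimC:
  assumes lam: "lam \<noteq> 0" and aj: "2 * al \<le> j"
  shows "kv.dim (Ann (G + Zl lam) \<inter> Rdeg i) = kv.dim (Ann (G + W1 + Zl lam) \<inter> Rdeg i) + (if 1 \<le> i \<and> i \<le> j - 1 then 1 else 0)"
proof -
  have al1: "1 \<le> al" by (rule al_props)
  let ?w = "(1::nat,0::nat,0::nat,i - 1)"
  consider (hi) "j < i" | (zero) "i = 0" | (topj) "i = j" | (lo) "1 \<le> i" "i \<le> j - 1" "i < al"
    | (up) "1 \<le> i" "i \<le> j - 1" "al \<le> i"
    by linarith
  then show ?thesis
  proof cases
    case hi
    have "Ann (G + Zl lam) \<inter> Rdeg i = Ann (G + W1 + Zl lam) \<inter> Rdeg i"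
      using high_Ann[OF _ hi deg_all(1)] high_Ann[OF _ hi deg_all(3)] by blast
    then show ?thesis using hi by simp
  next
    case zero
    have e1: "lk (G + Zl lam) mG \<noteq> 0" using lkG_mG mG(2) by (simp add: lookup_add lk_Zl)
    have e2: "lk (G + W1 + Zl lam) (1,0,0,j-1) \<noteq> 0" by (simp add: lookup_add lk_Zl lk_W1 lk_G_W)
    have "h \<in> Ann (G + Zl lam) \<longleftrightarrow> h \<in> Ann (G + W1 + Zl lam)" if h: "h \<in> Rdeg 0" for h
    proof -
      have "h \<in> Ann (G + Zl lam) \<longleftrightarrow> lk h 0 = 0"
        unfolding Ann_iff contract_R0[OF h] using e1 by (metis mult_eq_0_iff)
      moreover have "h \<in> Ann (G + W1 + Zl lam) \<longleftrightarrow> lk h 0 = 0"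
        unfolding Ann_iff contract_R0[OF h] using e2 by (metis mult_eq_0_iff)
      ultimately show ?thesis by simp
    qed
    then have "Ann (G + Zl lam) \<inter> Rdeg i = Ann (G + W1 + Zl lam) \<inter> Rdeg i" using zero by blast
    then show ?thesis using zero by simp
  next
    case topj
    let ?wj = "(1::nat,0::nat,0::nat,j - 1)"
    let ?f = "\<lambda>h. - (1 / lk G mG) * lk h ?wj" and ?u = "Poly_Mapping.single mG (1::'k)"
    have f: "addhom ?f" by (intro addhom_scale addhom_lookup)
    have mGw: "mG \<noteq> ?wj" using mG_fst by auto
    have u: "?f ?u = 0" using mGw by (simp add: lookup_single when_def)
    have uR: "?u \<in> Rdeg j" by (rule single_in_Rdeg[OF mG_deg])
    have cZ: "contract h (Zl lam) 0 = lk h (0,0,0,j) * lam" for h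
      unfolding Zl_def by (rule contract_single_right_hit) simp
    have cW: "contract h W1 0 = lk h ?wj" for h
      unfolding W1_def by (simp add: contract_single_right_hit)
    have "kv.dim (Ann (G + Zl lam) \<inter> Rdeg j) = kv.dim (Ann (G + W1 + Zl lam) \<inter> Rdeg j)"
    proof (rule dim_shift[OF f u])
      fix h :: "'k rpoly"
      let ?h' = "h + pscale (?f h) ?u"
      show "h \<in> Ann (G + Zl lam) \<inter> Rdeg j \<longleftrightarrow> ?h' \<in> Ann (G + W1 + Zl lam) \<inter> Rdeg j"
      proof (cases "h \<in> Rdeg j")
        case True
        have h'R: "?h' \<in> Rdeg j" using Rdeg_shift[OF uR, of h "?f h"] True by blast
        have e: "contract ?h' (G + W1 + Zl lam) 0 = contract h (G + Zl lam) 0"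
          using lkG_mG mG(2) mGw
          by (simp add: contract_add_left contract_diff_left lookup_minus contract_scale_left contract_add_right
              cZ cW contract_single_left lookup_add lk_W1 lk_Zl lookup_single when_def)
        show ?thesis
          using top_Ann[OF True deg_all(1)] top_Ann[OF h'R deg_all(3)] True h'R e by simp
      next
        case False
        then show ?thesis using Rdeg_shift[OF uR, of h "?f h"] by blast
      qed
    qed
    then show ?thesis using topj j2 by simp
  next
    case lo
    have ij: "i \<le> j" and a: "al \<le> j - i" using lo aj by linarith+
    let ?k = "Poly_Mapping.single ?w (1::'k)"
    have kR: "?k \<in> Rdeg i" by (rule single_in_Rdeg) (use lo in simp)
    have kA: "?k \<in> Ann (G + Zl lam)" unfolding Ann_iff
      using contract_Wsingle[OF Gl_fst] by simp
    have "kv.dim (Ann (G + Zl lam) \<inter> Rdeg i) = kv.dim (Ann (G + W1 + Zl lam) \<inter> Rdeg i) + 1"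
    proof (rule dim_codim1[where f = "\<lambda>h. lk h ?w" and k = ?k])
      show "kv.subspace (Ann (G + Zl lam) \<inter> Rdeg i)" by (intro kv.subspace_inter subspace_Ann subspace_Rdeg)
      show "Ann (G + Zl lam) \<inter> Rdeg i \<subseteq> Rdeg i" by blast
      show "addhom (\<lambda>h. lk h ?w)" by (rule addhom_lookup)
      show "?k \<in> Ann (G + Zl lam) \<inter> Rdeg i" using kA kR by blast
      show "lk ?k ?w \<noteq> 0" by simp
      show "Ann (G + W1 + Zl lam) \<inter> Rdeg i = Ann (G + Zl lam) \<inter> Rdeg i \<inter> {h. lk h ?w = 0}"
      proof (intro set_eqI iffI)
        fix h assume "h \<in> Ann (G + W1 + Zl lam) \<inter> Rdeg i"
        then have hR: "h \<in> Rdeg i" and M: "lk h (0,0,0,i) = 0"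
            "\<forall>c. contract h (G + Zl lam) c + lk h ?w * E (j - i) c = 0"
          using Ml_char[OF _ lo(1,2)] by blast+
        have "contract h G c = (- lk h ?w) * E (j - i) c" for c
          using M(2)[rule_format, of c] contract_Gl_E[OF hR ij, of lam c] M(1) by (simp add: eq_neg_iff_add_eq_0)
        then have w0: "- lk h ?w = 0" by (rule NoEx[OF ij a hR])
        then have "h \<in> Ann (G + Zl lam)" using M(2) unfolding Ann_iff by simp
        then show "h \<in> Ann (G + Zl lam) \<inter> Rdeg i \<inter> {h. lk h ?w = 0}" using hR w0 by simp
      next
        fix h assume h: "h \<in> Ann (G + Zl lam) \<inter> Rdeg i \<inter> {h. lk h ?w = 0}"
        then have hR: "h \<in> Rdeg i" by blast
        have z: "lk h (0,0,0,i) = 0" using Nl_cz(1)[OF hR ij a lam] h by blast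
        have "h \<in> Ann (G + Zl lam)" using h by blast
        then have "\<forall>c. contract h (G + Zl lam) c = 0" unfolding Ann_iff .
        then have "\<forall>c. contract h (G + Zl lam) c + lk h ?w * E (j - i) c = 0"
          using h by simp
        then show "h \<in> Ann (G + W1 + Zl lam) \<inter> Rdeg i" using Ml_char[OF hR lo(1,2)] z hR by blast
      qed
    qed
    then show ?thesis using lo by simp
  next
    case up
    have ij: "i \<le> j" using up by linarith
    obtain k0 where k0: "k0 \<in> Ann G" "k0 \<in> Rdeg i" "lk k0 (0,0,0,i) = 1" using Qup[OF up(3)] by blast
    let ?sw = "Poly_Mapping.single ?w (1::'k)"
    have swR: "?sw \<in> Rdeg i" by (rule single_in_Rdeg) (use up in simp)
    have swG: "contract ?sw P c = 0" if "\<forall>m\<in>ks P. fst m = 0" for P c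
      using contract_Wsingle[OF that] by simp
    define k where "k = k0 - pscale (lk k0 ?w) ?sw"
    have kR: "k \<in> Rdeg i" unfolding k_def
      using k0(2) swR by (intro kv.subspace_diff[OF subspace_Rdeg] kv.subspace_scale[OF subspace_Rdeg])
    have kG: "contract k G c = 0" for c
    proof -
      have "contract k0 G c = 0" using k0(1) unfolding Ann_iff by blast
      then show ?thesis using swG[OF G_fst] by (simp add: k_def contract_diff_left contract_scale_left)
    qed
    have kz: "lk k (0,0,0,i) = 1" using k0(3) by (simp add: k_def lookup_minus lookup_single)
    have kw: "lk k ?w = 0" by (simp add: k_def lookup_minus)
    have kGl: "contract k (G + Zl lam) c = lam * E (j - i) c" for c
      using contract_Gl_E[OF kR ij, of lam c] kG kz by simp
    define \<phi> where "\<phi> c h = contract h (G + Zl lam) c + lk h ?w * E (j - i) c" for c h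
    have \<phi>h: "addhom (\<phi> c)" for c
      unfolding \<phi>_def
      by (intro addhom_add addhom_contract) (simp add: addhom_def algebra_simps lookup_add)
    define Q where "Q = Rdeg i \<inter> {h. \<forall>c. \<phi> c h = 0}"
    have Qs: "kv.subspace Q" unfolding Q_def
      by (intro kv.subspace_inter subspace_Rdeg subspace_allker \<phi>h)
    define u where "u = k - pscale lam ?sw"
    have uR: "u \<in> Rdeg i" unfolding u_def
      using kR swR by (intro kv.subspace_diff[OF subspace_Rdeg] kv.subspace_scale[OF subspace_Rdeg])
    have uQ: "u \<in> Q"
    proof -
      have "\<phi> c u = 0" for c
        using kGl[of c] swG[OF Gl_fst] kw
        by (simp add: \<phi>_def u_def contract_diff_left contract_scale_left lookup_minus)
      then show ?thesis using uR unfolding Q_def by blast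
    qed
    have uz: "lk u (0,0,0,i) = 1" using kz by (simp add: u_def lookup_minus lookup_single)
    have d1: "kv.dim Q = kv.dim (Ann (G + W1 + Zl lam) \<inter> Rdeg i) + 1"
    proof (rule dim_codim1[OF Qs _ addhom_lookup uQ])
      show "Q \<subseteq> Rdeg i" unfolding Q_def by blast
      show "lk u (0,0,0,i) \<noteq> 0" using uz by simp
      show "Ann (G + W1 + Zl lam) \<inter> Rdeg i = Q \<inter> {h. lk h (0,0,0,i) = 0}"
        using Ml_char[OF _ up(1,2)] unfolding Q_def \<phi>_def by blast
    qed
    have d2: "kv.dim Q = kv.dim (Ann (G + Zl lam) \<inter> Rdeg i)"
    proof (rule dim_shift[where f = "\<lambda>h. (1 / lam) * lk h ?w" and u = k])
      show "addhom (\<lambda>h. (1 / lam) * lk h ?w)" by (intro addhom_scale addhom_lookup)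
      show "(1 / lam) * lk k ?w = 0" using kw by simp
      fix h :: "'k rpoly"
      let ?h' = "h + pscale ((1 / lam) * lk h ?w) k"
      show "h \<in> Q \<longleftrightarrow> ?h' \<in> Ann (G + Zl lam) \<inter> Rdeg i"
      proof (cases "h \<in> Rdeg i")
        case True
        have "contract ?h' (G + Zl lam) c = \<phi> c h" for c
          using lam by (simp add: \<phi>_def contract_add_left contract_scale_left kGl)
        then have "?h' \<in> Ann (G + Zl lam) \<longleftrightarrow> (\<forall>c. \<phi> c h = 0)" unfolding Ann_iff by simp
        then show ?thesis using True Rdeg_shift[OF kR, of h "(1 / lam) * lk h ?w"] unfolding Q_def by blast
      next
        case False
        then show ?thesis using Rdeg_shift[OF kR, of h "(1 / lam) * lk h ?w"] unfolding Q_def by blast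
      qed
    qed
    show ?thesis using d1 d2 up by simp
  qed
qed

end


context setting
begin

lemma part1_dim:
  "kv.dim (Ann (G + W1) \<inter> Rdeg i) = kv.dim (Ann (G + W1 + Zl lam) \<inter> Rdeg i)"
  "kv.dim (Ann (G + W1) \<inter> Ann G \<inter> Rdeg i) = kv.dim (Ann (G + W1 + Zl lam) \<inter> Ann (G + Zl lam) \<inter> Rdeg i)"
proof -
  consider (lo) "i < j" | (eq) "i = j" | (hi) "j < i" by linarith
  then have "kv.dim (Ann (G + W1) \<inter> Rdeg i) = kv.dim (Ann (G + W1 + Zl lam) \<inter> Rdeg i) \<and>
    kv.dim (Ann (G + W1) \<inter> Ann G \<inter> Rdeg i) = kv.dim (Ann (G + W1 + Zl lam) \<inter> Ann (G + Zl lam) \<inter> Rdeg i)"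
  proof cases
    case lo
    have "Ann (G + W1) \<inter> Rdeg i = Ann (G + W1 + Zl lam) \<inter> Rdeg i"
      using part1_low(1)[OF _ lo] by blast
    moreover have "Ann (G + W1) \<inter> Ann G \<inter> Rdeg i = Ann (G + W1 + Zl lam) \<inter> Ann (G + Zl lam) \<inter> Rdeg i"
      using part1_low(2)[OF _ lo] by blast
    ultimately show ?thesis by simp
  next
    case eq
    then show ?thesis using part1_top by simp
  next
    case hi
    have "Ann (G + W1) \<inter> Rdeg i = Ann (G + W1 + Zl lam) \<inter> Rdeg i"
      using high_Ann[OF _ hi deg_all(2)] high_Ann[OF _ hi deg_all(3)] by blast
    moreover have "Ann (G + W1) \<inter> Ann G \<inter> Rdeg i = Ann (G + W1 + Zl lam) \<inter> Ann (G + Zl lam) \<inter> Rdeg i"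
      using high_Ann[OF _ hi deg_all(2)] high_Ann[OF _ hi deg_all(3)]
        high_Ann[OF _ hi G_deg] high_Ann[OF _ hi deg_all(1)] by blast
    ultimately show ?thesis by simp
  qed
  then show "kv.dim (Ann (G + W1) \<inter> Rdeg i) = kv.dim (Ann (G + W1 + Zl lam) \<inter> Rdeg i)"
    "kv.dim (Ann (G + W1) \<inter> Ann G \<inter> Rdeg i) = kv.dim (Ann (G + W1 + Zl lam) \<inter> Ann (G + Zl lam) \<inter> Rdeg i)"
    by auto
qed

lemma main_result:
  shows "hilb (Ann (G + W1)) = hilb (Ann (G + W1 + Zl lam)) \<and>
    hilb (Ann (G + W1) \<inter> Ann G) = hilb (Ann (G + W1 + Zl lam) \<inter> Ann (G + Zl lam)) \<and>
    ((2 * alpha (Ann G) \<le> j \<and> lam \<noteq> 0) \<longrightarrow>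
      alpha (Ann (G + Zl lam)) = j + 1 - alpha (Ann G) \<and>
      (\<forall>i. hilb (Ann (G + Zl lam)) i = (if alpha (Ann G) \<le> i \<and> i \<le> j - alpha (Ann G) then hilb (Ann G) i + 1 else hilb (Ann G) i)) \<and>
      (\<forall>i. hilb (Ann (G + W1 + Zl lam)) i = hilb (Ann (G + Zl lam)) i + (if 1 \<le> i \<and> i \<le> j - 1 then 1 else 0)))"
proof (intro conjI impI allI)
  show "hilb (Ann (G + W1)) = hilb (Ann (G + W1 + Zl lam))"
    by (rule ext) (simp add: hilb_def kdim_eq part1_dim(1)[of _ lam])
  show "hilb (Ann (G + W1) \<inter> Ann G) = hilb (Ann (G + W1 + Zl lam) \<inter> Ann (G + Zl lam))"
    by (rule ext) (simp add: hilb_def kdim_eq part1_dim(2)[of _ lam])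
next
  assume a: "2 * alpha (Ann G) \<le> j \<and> lam \<noteq> 0"
  then have aj: "2 * al \<le> j" and lam: "lam \<noteq> 0" by (auto simp: al_def)
  show "alpha (Ann (G + Zl lam)) = j + 1 - alpha (Ann G)"
    using claimB[OF lam aj] by (simp add: al_def)
  fix i
  have le1: "kv.dim (Ann G \<inter> Rdeg i) \<le> kv.dim (Rdeg i :: 'k rpoly set)" by (rule dim_le_Rdeg) blast
  have le2: "kv.dim (Ann (G + Zl lam) \<inter> Rdeg i) \<le> kv.dim (Rdeg i :: 'k rpoly set)" by (rule dim_le_Rdeg) blast
  show "hilb (Ann (G + Zl lam)) i = (if alpha (Ann G) \<le> i \<and> i \<le> j - alpha (Ann G) then hilb (Ann G) i + 1 else hilb (Ann G) i)"
    using claimA[OF lam aj, of i] le1 unfolding hilb_def kdim_eq al_def[symmetric] by auto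
  show "hilb (Ann (G + W1 + Zl lam)) i = hilb (Ann (G + Zl lam)) i + (if 1 \<le> i \<and> i \<le> j - 1 then 1 else 0)"
    using claimC[OF lam aj, of i] le2 unfolding hilb_def kdim_eq by auto
qed

end

lemma x2_not_span: "Poly_Mapping.single (0,2,0,0) (1::'k::field) \<notin> kspan {vw * vw, vw * vx, vw * vy}"
proof -
  let ?W = "{p :: 'k rpoly. \<forall>m\<in>ks p. 1 \<le> fst m}"
  have sW: "kv.subspace ?W"
    unfolding kv.subspace_def
  proof (intro conjI ballI allI)
    show "(0 :: 'k rpoly) \<in> ?W" by simp
    fix x y :: "'k rpoly" and c :: 'k
    assume x: "x \<in> ?W"
    show "pscale c x \<in> ?W" using x by (auto simp: in_keys_iff)
    assume y: "y \<in> ?W"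
    show "x + y \<in> ?W" using x y keys_add[of x y] by auto
  qed
  have gens: "{vw * vw, vw * vx, vw * vy} \<subseteq> ?W"
    by (auto simp: vw_def vx_def vy_def mult_single)
  have "kspan {vw * vw, vw * vx, vw * vy} \<subseteq> ?W"
    unfolding kspan_eq by (rule kv.span_minimal[OF gens sW])
  moreover have "Poly_Mapping.single (0,2,0,0) (1::'k) \<notin> ?W" by simp
  ultimately show ?thesis by blast
qed


theorem lemma3p24:
  fixes G :: "'k::alg_closed_field dppoly" and j :: nat and lam :: 'k
  assumes G: "G \<in> DPxyz_deg j"
    and I2: "Ann (G + Poly_Mapping.single (1,0,0,j-1) 1) \<inter> Rdeg 2 = kspan {vw * vw, vw * vx, vw * vy}"
  defines "I \<equiv> Ann (G + Poly_Mapping.single (1,0,0,j-1) 1)"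
    and "J \<equiv> Ann G"
    and "Jl \<equiv> Ann (G + Poly_Mapping.single (0,0,0,j) lam)"
    and "Il \<equiv> Ann (G + Poly_Mapping.single (1,0,0,j-1) 1 + Poly_Mapping.single (0,0,0,j) lam)"
  shows "hilb I = hilb Il \<and> hilb (I \<inter> J) = hilb (Il \<inter> Jl) \<and>
    ((2 * alpha J \<le> j \<and> lam \<noteq> 0) \<longrightarrow>
      alpha Jl = j + 1 - alpha J \<and>
      (\<forall>i. hilb Jl i = (if alpha J \<le> i \<and> i \<le> j - alpha J then hilb J i + 1 else hilb J i)) \<and>
      (\<forall>i. hilb Il i = hilb Jl i + (if 1 \<le> i \<and> i \<le> j - 1 then 1 else 0)))"
proof -
  have Gk: "\<And>m. m \<in> ks G \<Longrightarrow> fst m = 0 \<and> mdeg m = j" using G by (auto simp: DPxyz_deg_def)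
  let ?x2 = "Poly_Mapping.single (0,2,0,0) (1::'k)"
  let ?W = "Poly_Mapping.single (1,0,0,j-1) (1::'k)"
  have x2R: "?x2 \<in> Rdeg 2" by (rule single_in_Rdeg) simp
  have "?x2 \<notin> Ann (G + ?W)" using I2 x2_not_span x2R by blast
  then obtain c where c: "contract ?x2 (G + ?W) c \<noteq> 0" unfolding Ann_iff by blast
  obtain c1 c2 c3 c4 where cc: "c = (c1,c2,c3,c4)" by (cases c) auto
  let ?m = "(c1, 2 + c2, c3, c4)"
  have m: "(0,2,0,0) + c = ?m" using cc by (simp add: cc)
  have "lk (G + ?W) ?m \<noteq> 0" using c m by (simp add: contract_single_left)
  moreover have "lk ?W ?m = 0" by (simp add: lookup_single when_def)
  ultimately have "lk G ?m \<noteq> 0" by (simp add: lookup_add)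
  then have mk: "?m \<in> ks G" by (simp add: in_keys_iff)
  then have md: "mdeg ?m = j" using Gk by blast
  then have j2: "2 \<le> j" and mz: "?m \<noteq> (0,0,0,j)" by auto
  interpret S: setting G j ?m using Gk mk mz j2 by unfold_locales auto
  have W: "?W = S.W1" by (simp add: S.W1_def)
  have Z: "Poly_Mapping.single (0,0,0,j) lam = S.Zl lam" by (simp add: S.Zl_def)
  show ?thesis
    using S.main_result[of lam] unfolding I_def J_def Jl_def Il_def W Z by simp
qed

end
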